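(* Let $k,m,n$ be positive integers. For all $X\in M_{m\times n}(R_k)$ and $Y\in M_{n\times m}(R_k)$ we have $\mathfrak{T}_k(XY)=\mathfrak{T}_k(YX)$ in $\mathbb{Z}/k\mathbb{Z}$.
   Context: $\mathbb{N}=\{1,2,3,\dots\}$. $R$ denotes the ring of all $\mathbb{N}\times\mathbb{N}$ integer matrices with only finitely many nonzero entries in each row and each column, with entrywise addition and multiplication $(AB)_{i,j}=\sum_{l\ge1}a_{i,l}b_{l,j}$. Fix a positive integer $k$. Partition $\mathbb{N}$ into consecutive blocks $J_1=\{1\}$ and, for $m\ge2$, $J_m=\{2+k(m-2),\dots,1+k(m-1)\}$. For $A\in R$, the block $A^{m,n}$ is the submatrix with rows indexed by $J_m$ and columns by $J_n$. $R_k$ is the subring of $A\in R$ such that for all but finitely many pairs $(m,n)$ with $m,n\ge2$, $A^{m,n}=cI_k$ for some integer $c$. For a finite square integer matrix $M$, $\operatorname{t}_k(M)\in\mathbb{Z}/k\mathbb{Z}$ is the residue class of the sum of its diagonal entries. For $A\in R_k$, $\operatorname{T}_k(A)=\sum_{n\ge1}\operatorname{t}_k(A^{n,n})\in\mathbb{Z}/k\mathbb{Z}$ (a finite sum). For a square matrix $W\in M_{d\times d}(R_k)$, $\mathfrak{T}_k(W)=\sum_{l=1}^d\operatorname{T}_k(W_{l,l})$. *)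

theory Defs
  imports Main
begin

text \<open>Infinite integer matrices indexed by positive naturals (index 0 is unused and
  required to carry zero entries).\<close>
type_synonym imat = "nat \<Rightarrow> nat \<Rightarrow> int"

definition inR :: "imat \<Rightarrow> bool" where
  "inR A \<longleftrightarrow> (\<forall>i j. (i = 0 \<or> j = 0) \<longrightarrow> A i j = 0)
      \<and> (\<forall>i. finite {j. A i j \<noteq> 0}) \<and> (\<forall>j. finite {i. A i j \<noteq> 0})"

definition rmult :: "imat \<Rightarrow> imat \<Rightarrow> imat" where
  "rmult A B = (\<lambda>i j. \<Sum>l\<in>{l. 1 \<le> l \<and> A i l \<noteq> 0}. A i l * B l j)"

definition Jblk :: "nat \<Rightarrow> nat \<Rightarrow> nat set" where
  "Jblk k p = (if p = 1 then {1} else {2 + k * (p - 2) .. 1 + k * (p - 1)})"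

definition blkent :: "nat \<Rightarrow> imat \<Rightarrow> nat \<Rightarrow> nat \<Rightarrow> nat \<Rightarrow> nat \<Rightarrow> int" where
  "blkent k A p q r s = A (2 + k * (p - 2) + r) (2 + k * (q - 2) + s)"

definition scalar_blk :: "nat \<Rightarrow> imat \<Rightarrow> nat \<Rightarrow> nat \<Rightarrow> bool" where
  "scalar_blk k A p q \<longleftrightarrow> (\<exists>c::int. \<forall>r<k. \<forall>s<k. blkent k A p q r s = (if r = s then c else 0))"

definition inRk :: "nat \<Rightarrow> imat \<Rightarrow> bool" where
  "inRk k A \<longleftrightarrow> inR A \<and> finite {(p, q). p \<ge> 2 \<and> q \<ge> 2 \<and> \<not> scalar_blk k A p q}"

definition blktr :: "nat \<Rightarrow> imat \<Rightarrow> nat \<Rightarrow> int" where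
  "blktr k A p = (\<Sum>i\<in>Jblk k p. A i i)"

text \<open>T_k(A) in Z/kZ, represented by its canonical residue in {0..k-1}: the sum of
  t_k(A^{p,p}) over p \<ge> 1 (only the finitely many nonzero residues contribute).\<close>
definition Tk :: "nat \<Rightarrow> imat \<Rightarrow> int" where
  "Tk k A = (\<Sum>p\<in>{p. 1 \<le> p \<and> blktr k A p mod int k \<noteq> 0}. blktr k A p) mod int k"

text \<open>Finite matrices over R: entries indexed by 1..rows, 1..cols.\<close>
type_synonym rmat = "nat \<Rightarrow> nat \<Rightarrow> imat"

definition mmult :: "nat \<Rightarrow> rmat \<Rightarrow> rmat \<Rightarrow> rmat" where
  "mmult n X Y = (\<lambda>a b. (\<lambda>i j. \<Sum>c = 1..n. rmult (X a c) (Y c b) i j))"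

definition frakT :: "nat \<Rightarrow> nat \<Rightarrow> rmat \<Rightarrow> int" where
  "frakT k d W = (\<Sum>l = 1..d. Tk k (W l l)) mod int k"

end

theory Submission
  imports Defs
begin

definition bM :: "nat \<Rightarrow> nat \<Rightarrow> nat" where "bM k N = 1 + k*(N-1)"

lemma sum_shift_lt: "(\<Sum>i\<in>{a..<a+k}. f i) = (\<Sum>r<k. f (a + r))" for a k :: nat
  by (induction k) (auto simp: add.commute)

lemma sum_shift_gr: "(\<Sum>i\<in>{a<..a+k}. f i) = (\<Sum>r<k. f (a + 1 + r))" for a k :: nat
proof -
  have "{a<..a+k} = {a+1..<a+1+k}" by auto
  then show ?thesis using sum_shift_lt[of f "a+1" k] by simp
qed

lemma bM_Suc: "1 \<le> N \<Longrightarrow> bM k (Suc N) = bM k N + k"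
  unfolding bM_def by (cases N) auto

lemma bM_base: "1 \<le> N \<Longrightarrow> 2 + k*(Suc N - 2) = bM k N + 1"
  unfolding bM_def by (cases N) auto

lemma BD:
  assumes "1 \<le> N1" "N1 \<le> N2"
  shows "(\<Sum>i\<in>{bM k N1<..bM k N2}. f i) = (\<Sum>p\<in>{N1<..N2}. \<Sum>r<k. f (2 + k*(p-2) + r))"
  using assms(2)
proof (induction N2 rule: dec_induct)
  case base then show ?case by simp
next
  case (step N2)
  have N2: "1 \<le> N2" using assms(1) step by simp
  have mono: "bM k N1 \<le> bM k N2" unfolding bM_def using step(1) by (intro add_left_mono mult_left_mono diff_le_mono) auto
  have e1: "{bM k N1<..bM k (Suc N2)} = {bM k N1<..bM k N2} \<union> {bM k N2<..bM k N2 + k}"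
    using bM_Suc[OF N2] mono by auto
  have e2: "{N1<..Suc N2} = insert (Suc N2) {N1<..N2}" using step by auto
  have "(\<Sum>i\<in>{bM k N1<..bM k (Suc N2)}. f i) = (\<Sum>i\<in>{bM k N1<..bM k N2}. f i) + (\<Sum>i\<in>{bM k N2<..bM k N2 + k}. f i)"
    unfolding e1 by (rule sum.union_disjoint) auto
  also have "(\<Sum>i\<in>{bM k N2<..bM k N2 + k}. f i) = (\<Sum>r<k. f (2 + k*(Suc N2-2) + r))"
    unfolding sum_shift_gr bM_base[OF N2] by simp
  finally show ?case using step.IH e2 by (simp add: add.commute)
qed

lemma Jsum: "2 \<le> p \<Longrightarrow> 0 < k \<Longrightarrow> blktr k A p = (\<Sum>r<k. A (2 + k*(p-2) + r) (2 + k*(p-2) + r))"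
proof -
  assume p: "2 \<le> p" and k: "0 < k"
  have "Jblk k p = {2 + k*(p-2)..<2 + k*(p-2) + k}"
    unfolding Jblk_def using p k
    apply (cases p) apply simp
    apply (auto simp: algebra_simps)
    done
  then show ?thesis by (simp only: blktr_def sum_shift_lt)
qed

lemma scalar_val:
  assumes "scalar_blk k X p q" "r < k" "s < k"
  shows "X (2 + k*(p-2) + r) (2 + k*(q-2) + s) = (if r = s then X (2 + k*(p-2)) (2 + k*(q-2)) else 0)"
proof -
  obtain c where c: "\<forall>r<k. \<forall>s<k. blkent k X p q r s = (if r = s then c else 0)"
    using assms(1) unfolding scalar_blk_def by blast
  have k: "0 < k" using assms(2) by simp
  have "X (2 + k*(p-2)) (2 + k*(q-2)) = c" using c[rule_format, of 0 0] k by (simp add: blkent_def)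
  then show ?thesis using c[rule_format, OF assms(2,3)] by (simp add: blkent_def)
qed

lemma Core:
  assumes "\<forall>q\<in>Q. scalar_blk k X p q \<and> scalar_blk k Y q p"
  shows "(\<Sum>r<k. \<Sum>q\<in>Q. \<Sum>s<k. X (2 + k*(p-2) + r) (2 + k*(q-2) + s) * Y (2 + k*(q-2) + s) (2 + k*(p-2) + r))
     = int k * (\<Sum>q\<in>Q. X (2 + k*(p-2)) (2 + k*(q-2)) * Y (2 + k*(q-2)) (2 + k*(p-2)))"
proof -
  have "\<And>r q. r < k \<Longrightarrow> q \<in> Q \<Longrightarrow> (\<Sum>s<k. X (2 + k*(p-2) + r) (2 + k*(q-2) + s) * Y (2 + k*(q-2) + s) (2 + k*(p-2) + r))
      = X (2 + k*(p-2)) (2 + k*(q-2)) * Y (2 + k*(q-2)) (2 + k*(p-2))"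
  proof -
    fix r q assume r: "r < k" and q: "q \<in> Q"
    have "(\<Sum>s<k. X (2 + k*(p-2) + r) (2 + k*(q-2) + s) * Y (2 + k*(q-2) + s) (2 + k*(p-2) + r))
      = (\<Sum>s<k. if s = r then X (2 + k*(p-2)) (2 + k*(q-2)) * Y (2 + k*(q-2)) (2 + k*(p-2)) else 0)"
      apply (rule sum.cong, simp)
      using scalar_val[of k X p q r] scalar_val[of k Y q p _ r] assms q r by auto
    also have "\<dots> = X (2 + k*(p-2)) (2 + k*(q-2)) * Y (2 + k*(q-2)) (2 + k*(p-2))"
      using r by (simp add: sum.delta)
    finally show "?thesis r q" .
  qed
  then have "(\<Sum>r<k. \<Sum>q\<in>Q. \<Sum>s<k. X (2 + k*(p-2) + r) (2 + k*(q-2) + s) * Y (2 + k*(q-2) + s) (2 + k*(p-2) + r))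
     = (\<Sum>r<k. \<Sum>q\<in>Q. X (2 + k*(p-2)) (2 + k*(q-2)) * Y (2 + k*(q-2)) (2 + k*(p-2)))"
    by (intro sum.cong) auto
  then show ?thesis by simp
qed

lemma R1:
  assumes "inR X" "finite L" "\<And>l. X i l \<noteq> 0 \<Longrightarrow> l \<in> L"
  shows "rmult X Y i j = (\<Sum>l\<in>L. X i l * Y l j)"
proof -
  have z: "X i 0 = 0" using assms(1) unfolding inR_def by auto
  have "rmult X Y i j = (\<Sum>l\<in>{l. 1 \<le> l \<and> X i l \<noteq> 0}. X i l * Y l j)" by (simp add: rmult_def)
  also have "\<dots> = (\<Sum>l\<in>L. X i l * Y l j)"
    apply (rule sum.mono_neutral_left[OF assms(2)])
    using assms(3) apply auto[1]
    apply auto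
    by (metis One_nat_def Suc_leI gr0I z)
  finally show ?thesis .
qed

definition good :: "nat \<Rightarrow> imat \<Rightarrow> nat \<Rightarrow> bool" where
  "good k X B \<longleftrightarrow> 1 \<le> B \<and> (\<forall>p q. 2 \<le> p \<longrightarrow> 2 \<le> q \<longrightarrow> (B < p \<or> B < q) \<longrightarrow> scalar_blk k X p q)
     \<and> (\<forall>l. bM k B < l \<longrightarrow> X 1 l = 0 \<and> X l 1 = 0)"

lemma bM_mono: "B \<le> B' \<Longrightarrow> bM k B \<le> bM k B'"
  unfolding bM_def by (intro add_left_mono mult_left_mono diff_le_mono) auto

lemma bM_ge: "0 < k \<Longrightarrow> 1 \<le> B \<Longrightarrow> B \<le> bM k B"
  unfolding bM_def by (cases B) auto

lemma good_mono: "good k X B \<Longrightarrow> B \<le> B' \<Longrightarrow> good k X B'"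
proof -
  assume g: "good k X B" and b: "B \<le> B'"
  have m: "bM k B \<le> bM k B'" using bM_mono[OF b] .
  have 1: "1 \<le> B'" using g b unfolding good_def by simp
  have 2: "\<forall>p q. 2 \<le> p \<longrightarrow> 2 \<le> q \<longrightarrow> (B' < p \<or> B' < q) \<longrightarrow> scalar_blk k X p q"
    using g b unfolding good_def by (meson le_less_trans)
  have 3: "\<forall>l. bM k B' < l \<longrightarrow> X 1 l = 0 \<and> X l 1 = 0"
    using g m unfolding good_def by (meson le_less_trans)
  show "good k X B'" unfolding good_def using 1 2 3 by blast
qed

lemma fin_bound: "finite (S::nat set) \<Longrightarrow> \<exists>K. \<forall>x\<in>S. x \<le> K"
  using finite_nat_set_iff_bounded_le by blast

lemma good_exists:
  assumes "inRk k X" "0 < k"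
  shows "\<exists>B. good k X B"
proof -
  have fin: "finite {(p, q). p \<ge> 2 \<and> q \<ge> 2 \<and> \<not> scalar_blk k X p q}" and R: "inR X"
    using assms unfolding inRk_def by auto
  obtain K1 where K1: "\<forall>x\<in>{(p, q). p \<ge> 2 \<and> q \<ge> 2 \<and> \<not> scalar_blk k X p q}. fst x \<le> K1 \<and> snd x \<le> K1"
  proof -
    obtain K where "\<forall>x\<in>fst ` {(p, q). p \<ge> 2 \<and> q \<ge> 2 \<and> \<not> scalar_blk k X p q} \<union> snd ` {(p, q). p \<ge> 2 \<and> q \<ge> 2 \<and> \<not> scalar_blk k X p q}. x \<le> K"
      using fin_bound fin by (meson finite_Un finite_imageI)
    then show ?thesis using that by blast
  qed
  obtain K2 where K2: "\<forall>x\<in>{l. X 1 l \<noteq> 0} \<union> {l. X l 1 \<noteq> 0}. x \<le> K2"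
    using fin_bound R unfolding inR_def by (meson finite_Un)
  define B where "B = max 1 (max K1 K2)"
  have h: "1 \<le> B" "K2 \<le> B" "K1 \<le> B" by (auto simp: B_def)
  have 2: "\<forall>p q. 2 \<le> p \<longrightarrow> 2 \<le> q \<longrightarrow> (B < p \<or> B < q) \<longrightarrow> scalar_blk k X p q"
  proof (intro allI impI)
    fix p q assume "2 \<le> p" "2 \<le> q" "B < p \<or> B < q"
    then show "scalar_blk k X p q" using K1 h(3) by fastforce
  qed
  have 3: "\<forall>l. bM k B < l \<longrightarrow> X 1 l = 0 \<and> X l 1 = 0"
  proof (intro allI impI)
    fix l assume l: "bM k B < l"
    have "K2 < l" using bM_ge[OF assms(2) h(1)] h(2) l by linarith
    then show "X 1 l = 0 \<and> X l 1 = 0" using K2 by force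
  qed
  have "good k X B" unfolding good_def using h(1) 2 3 by blast
  then show ?thesis by blast
qed

lemma LemA':
  assumes "0 < k" "1 \<le> N"
  shows "(\<Sum>p\<in>{1..N}. blktr k A p) = (\<Sum>i\<in>{1..bM k N}. A i i)"
proof -
  have bM1: "bM k 1 = 1" by (simp add: bM_def)
  have e1: "{1..N} = insert 1 {1<..N}" using assms by auto
  have e2: "{1..bM k N} = insert 1 {1<..bM k N}" using bM_ge[OF assms] assms(2) by auto
  have b1: "blktr k A 1 = A 1 1" by (simp add: blktr_def Jblk_def)
  have "(\<Sum>i\<in>{1<..bM k N}. A i i) = (\<Sum>p\<in>{1<..N}. \<Sum>r<k. A (2 + k*(p-2) + r) (2 + k*(p-2) + r))"
    by (rule BD[of 1 N "\<lambda>i. A i i" k, unfolded bM1, OF order_refl assms(2)])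
  also have "\<dots> = (\<Sum>p\<in>{1<..N}. blktr k A p)"
    using Jsum assms(1) by (intro sum.cong) auto
  finally have m: "(\<Sum>i\<in>{1<..bM k N}. A i i) = (\<Sum>p\<in>{1<..N}. blktr k A p)" .
  have "(\<Sum>p\<in>{1..N}. blktr k A p) = blktr k A 1 + (\<Sum>p\<in>{1<..N}. blktr k A p)"
    unfolding e1 by (rule sum.insert) auto
  also have "(\<Sum>i\<in>{1..bM k N}. A i i) = A 1 1 + (\<Sum>i\<in>{1<..bM k N}. A i i)"
    unfolding e2 by (rule sum.insert) auto
  ultimately show ?thesis using m b1 by simp
qed


lemma LemA:
  assumes "0 < k" "\<forall>p>B. blktr k A p mod int k = 0" "B \<le> N" "1 \<le> N"
  shows "Tk k A = (\<Sum>i\<in>{1..bM k N}. A i i) mod int k"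
proof -
  define P where "P = {p. 1 \<le> p \<and> blktr k A p mod int k \<noteq> 0}"
  have sub: "P \<subseteq> {1..N}"
  proof
    fix p assume p: "p \<in> P"
    then have p1: "1 \<le> p" and p2: "blktr k A p mod int k \<noteq> 0" unfolding P_def by auto
    have "\<not> B < p" using p2 assms(2) by blast
    then show "p \<in> {1..N}" using p1 assms(3) by simp
  qed
  have S: "(\<Sum>p\<in>{1..N}. blktr k A p) = (\<Sum>p\<in>P. blktr k A p) + (\<Sum>p\<in>{1..N} - P. blktr k A p)"
    using sum.subset_diff[OF sub finite_atLeastAtMost] by (simp only: add.commute)
  have d: "(\<Sum>p\<in>{1..N} - P. blktr k A p) mod int k = 0"
  proof (rule dvd_imp_mod_0, rule dvd_sum)
    fix p assume "p \<in> {1..N} - P"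
    then have "blktr k A p mod int k = 0" unfolding P_def by auto
    then show "int k dvd blktr k A p" by (simp only: dvd_eq_mod_eq_0)
  qed
  have "(\<Sum>p\<in>{1..N}. blktr k A p) mod int k = ((\<Sum>p\<in>P. blktr k A p) + (\<Sum>p\<in>{1..N} - P. blktr k A p) mod int k) mod int k"
    unfolding S by (rule mod_add_right_eq[symmetric])
  also have "\<dots> = (\<Sum>p\<in>P. blktr k A p) mod int k" unfolding d by simp
  finally have "(\<Sum>p\<in>{1..N}. blktr k A p) mod int k = (\<Sum>p\<in>P. blktr k A p) mod int k" .
  then show ?thesis unfolding Tk_def LemA'[OF assms(1,4)] P_def by (rule sym)
qed

lemma row_bound:
  assumes "inR X" "finite I"
  shows "\<exists>K. \<forall>i\<in>I. \<forall>l. X i l \<noteq> 0 \<longrightarrow> l \<le> K"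
proof -
  have "finite (\<Union>i\<in>I. {l. X i l \<noteq> 0})" using assms unfolding inR_def by auto
  then obtain K where "\<forall>x\<in>(\<Union>i\<in>I. {l. X i l \<noteq> 0}). x \<le> K" using fin_bound by blast
  then show ?thesis by blast
qed

lemma bp_gt: "B < p \<Longrightarrow> 1 \<le> B \<Longrightarrow> bM k B < 2 + k*(p-2) + r"
proof -
  assume a: "B < p" "1 \<le> B"
  have "k*(B-1) \<le> k*(p-2)" using a by (intro mult_left_mono) auto
  then show ?thesis unfolding bM_def by linarith
qed

lemma good_scal: "good k X B \<Longrightarrow> 2 \<le> p \<Longrightarrow> 2 \<le> q \<Longrightarrow> B < p \<or> B < q \<Longrightarrow> scalar_blk k X p q"
  unfolding good_def by blast

lemma good_row: "good k X B \<Longrightarrow> bM k B < l \<Longrightarrow> X 1 l = 0"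
  unfolding good_def by blast

lemma good_col: "good k X B \<Longrightarrow> bM k B < l \<Longrightarrow> X l 1 = 0"
  unfolding good_def by blast

lemma good_1: "good k X B \<Longrightarrow> 1 \<le> B"
  unfolding good_def by blast

lemma LemB:
  assumes k: "0 < k" and R: "inR X" "inR Y" and g: "good k X B" "good k Y B" and p: "B < p"
  shows "blktr k (rmult X Y) p mod int k = 0"
proof -
  have B1: "1 \<le> B" using good_1[OF g(1)] .
  have p2: "2 \<le> p" using p B1 by simp
  obtain K where K: "\<forall>i\<in>(\<lambda>r. 2 + k*(p-2) + r) ` {..<k}. \<forall>l. X i l \<noteq> 0 \<longrightarrow> l \<le> K"
    using row_bound[OF R(1), of "(\<lambda>r. 2 + k*(p-2) + r) ` {..<k}"] by blast
  define Q0 where "Q0 = max p K"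
  have Q01: "1 \<le> Q0" "K \<le> Q0" using p2 by (auto simp: Q0_def)
  have KQ: "K \<le> bM k Q0" using bM_ge[OF k Q01(1)] Q01(2) by linarith
  have bM1: "bM k 1 = 1" by (simp add: bM_def)
  have e2: "{1..bM k Q0} = insert 1 {1<..bM k Q0}" using bM_ge[OF k Q01(1)] Q01(1) by auto
  have row: "rmult X Y (2 + k*(p-2) + r) (2 + k*(p-2) + r) =
     (\<Sum>q\<in>{1<..Q0}. \<Sum>s<k. X (2 + k*(p-2) + r) (2 + k*(q-2) + s) * Y (2 + k*(q-2) + s) (2 + k*(p-2) + r))"
    if r: "r < k" for r
  proof -
    let ?i = "2 + k*(p-2) + r"
    have z: "X ?i 0 = 0" using R(1) unfolding inR_def by auto
    have A: "rmult X Y ?i ?i = (\<Sum>l\<in>{1..bM k Q0}. X ?i l * Y l ?i)"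
    proof (rule R1[OF R(1)])
      fix l assume l: "X ?i l \<noteq> 0"
      then have "l \<le> K" using K r by blast
      moreover have "l \<noteq> 0" using l z by metis
      ultimately show "l \<in> {1..bM k Q0}" using KQ by auto
    qed simp
    have B: "(\<Sum>l\<in>{1..bM k Q0}. X ?i l * Y l ?i) = X ?i 1 * Y 1 ?i + (\<Sum>l\<in>{1<..bM k Q0}. X ?i l * Y l ?i)"
      unfolding e2 by (rule sum.insert) auto
    have C: "X ?i 1 = 0" using good_col[OF g(1) bp_gt[OF p B1]] .
    have D: "(\<Sum>l\<in>{1<..bM k Q0}. X ?i l * Y l ?i) =
       (\<Sum>q\<in>{1<..Q0}. \<Sum>s<k. X ?i (2 + k*(q-2) + s) * Y (2 + k*(q-2) + s) ?i)"
      by (rule BD[of 1 Q0 "\<lambda>l. X ?i l * Y l ?i" k, unfolded bM1, OF order_refl Q01(1)])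
    show ?thesis unfolding A B C D by simp
  qed
  have "blktr k (rmult X Y) p = (\<Sum>r<k. rmult X Y (2 + k*(p-2) + r) (2 + k*(p-2) + r))"
    using Jsum[OF p2 k] .
  also have "\<dots> = (\<Sum>r<k. \<Sum>q\<in>{1<..Q0}. \<Sum>s<k. X (2 + k*(p-2) + r) (2 + k*(q-2) + s) * Y (2 + k*(q-2) + s) (2 + k*(p-2) + r))"
    using row by (intro sum.cong) auto
  also have "\<dots> = int k * (\<Sum>q\<in>{1<..Q0}. X (2 + k*(p-2)) (2 + k*(q-2)) * Y (2 + k*(q-2)) (2 + k*(p-2)))"
  proof (rule Core, intro ballI conjI)
    fix q assume q: "q \<in> {1<..Q0}"
    have "2 \<le> q" using q by auto
    then show "scalar_blk k X p q" "scalar_blk k Y q p" using good_scal[OF g(1) p2] good_scal[OF g(2) _ p2] p by auto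
  qed
  finally show ?thesis by simp
qed

lemma Cross0:
  assumes g: "good k X N" "good k Y N" and NQ: "N \<le> Q0" and k: "0 < k"
  shows "int k dvd (\<Sum>i\<in>{1..bM k N}. \<Sum>l\<in>{bM k N<..bM k Q0}. X i l * Y l i)"
proof -
  have N1: "1 \<le> N" using good_1[OF g(1)] .
  have bM1: "bM k 1 = 1" by (simp add: bM_def)
  have e: "{1..bM k N} = insert 1 {1<..bM k N}" using bM_ge[OF k N1] N1 by auto
  have t1: "(\<Sum>l\<in>{bM k N<..bM k Q0}. X 1 l * Y l 1) = 0"
    using good_row[OF g(1)] by (intro sum.neutral) auto
  have "(\<Sum>i\<in>{1<..bM k N}. \<Sum>l\<in>{bM k N<..bM k Q0}. X i l * Y l i)
     = (\<Sum>p\<in>{1<..N}. \<Sum>r<k. \<Sum>l\<in>{bM k N<..bM k Q0}. X (2 + k*(p-2) + r) l * Y l (2 + k*(p-2) + r))"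
    by (rule BD[of 1 N "\<lambda>i. \<Sum>l\<in>{bM k N<..bM k Q0}. X i l * Y l i" k, unfolded bM1, OF order_refl N1])
  also have "\<dots> = (\<Sum>p\<in>{1<..N}. \<Sum>r<k. \<Sum>q\<in>{N<..Q0}. \<Sum>s<k. X (2 + k*(p-2) + r) (2 + k*(q-2) + s) * Y (2 + k*(q-2) + s) (2 + k*(p-2) + r))"
    by (intro sum.cong refl BD[OF N1 NQ])
  also have "\<dots> = (\<Sum>p\<in>{1<..N}. int k * (\<Sum>q\<in>{N<..Q0}. X (2 + k*(p-2)) (2 + k*(q-2)) * Y (2 + k*(q-2)) (2 + k*(p-2))))"
  proof (rule sum.cong[OF refl])
    fix p assume p: "p \<in> {1<..N}"
    show "(\<Sum>r<k. \<Sum>q\<in>{N<..Q0}. \<Sum>s<k. X (2 + k*(p-2) + r) (2 + k*(q-2) + s) * Y (2 + k*(q-2) + s) (2 + k*(p-2) + r))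
       = int k * (\<Sum>q\<in>{N<..Q0}. X (2 + k*(p-2)) (2 + k*(q-2)) * Y (2 + k*(q-2)) (2 + k*(p-2)))"
    proof (rule Core, intro ballI conjI)
      fix q assume q: "q \<in> {N<..Q0}"
      have "2 \<le> p" "2 \<le> q" "N < q" using p q N1 by auto
      then show "scalar_blk k X p q" "scalar_blk k Y q p" using good_scal[OF g(1)] good_scal[OF g(2)] by auto
    qed
  qed
  finally have eq: "(\<Sum>i\<in>{1<..bM k N}. \<Sum>l\<in>{bM k N<..bM k Q0}. X i l * Y l i) = 
     (\<Sum>p\<in>{1<..N}. int k * (\<Sum>q\<in>{N<..Q0}. X (2 + k*(p-2)) (2 + k*(q-2)) * Y (2 + k*(q-2)) (2 + k*(p-2))))" .
  have "int k dvd (\<Sum>i\<in>{1<..bM k N}. \<Sum>l\<in>{bM k N<..bM k Q0}. X i l * Y l i)"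
    unfolding eq by (rule dvd_sum) simp
  then show ?thesis unfolding e using t1 by (subst sum.insert) auto
qed

lemma modadd: "(c::int) dvd b \<Longrightarrow> (a + b) mod c = a mod c"
  by (elim dvdE) simp

lemma sum_mod_cong: "(\<And>x. x \<in> A \<Longrightarrow> f x mod (c::int) = g x mod c) \<Longrightarrow> sum f A mod c = sum g A mod c"
proof -
  assume h: "\<And>x. x \<in> A \<Longrightarrow> f x mod (c::int) = g x mod c"
  have "sum f A mod c = (\<Sum>x\<in>A. f x mod c) mod c" by (rule mod_sum_eq[symmetric])
  also have "\<dots> = (\<Sum>x\<in>A. g x mod c) mod c" using h by (metis (mono_tags, lifting) sum.cong)
  also have "\<dots> = sum g A mod c" by (rule mod_sum_eq)
  finally show ?thesis .
qed

lemma LemC: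
  assumes k: "0 < k" and R: "inR X" "inR Y" and g: "good k X N" "good k Y N"
  shows "(\<Sum>i\<in>{1..bM k N}. rmult X Y i i) mod int k = (\<Sum>i\<in>{1..bM k N}. rmult Y X i i) mod int k"
proof -
  let ?I = "{1..bM k N}"
  have N1: "1 \<le> N" using good_1[OF g(1)] .
  obtain K1 where K1: "\<forall>i\<in>?I. \<forall>l. X i l \<noteq> 0 \<longrightarrow> l \<le> K1" using row_bound[OF R(1)] by blast
  obtain K2 where K2: "\<forall>i\<in>?I. \<forall>l. Y i l \<noteq> 0 \<longrightarrow> l \<le> K2" using row_bound[OF R(2)] by blast
  define Q0 where "Q0 = max N (max K1 K2)"
  have Q: "1 \<le> Q0" "N \<le> Q0" "K1 \<le> Q0" "K2 \<le> Q0" using N1 by (auto simp: Q0_def)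
  have KQ: "K1 \<le> bM k Q0" "K2 \<le> bM k Q0" using bM_ge[OF k Q(1)] Q by linarith+
  let ?C = "{bM k N<..bM k Q0}"
  have mono: "bM k N \<le> bM k Q0" using bM_mono[OF Q(2)] .
  have LU: "{1..bM k Q0} = ?I \<union> ?C" using mono by auto
  have split: "(\<Sum>l\<in>{1..bM k Q0}. F l) = (\<Sum>l\<in>?I. F l) + (\<Sum>l\<in>?C. F l)" for F :: "nat \<Rightarrow> int"
    unfolding LU by (rule sum.union_disjoint) auto
  have zX: "\<And>i. X i 0 = 0" and zY: "\<And>i. Y i 0 = 0" using R unfolding inR_def by auto
  have hX: "rmult X Y i i = (\<Sum>l\<in>?I. X i l * Y l i) + (\<Sum>l\<in>?C. X i l * Y l i)" if i: "i \<in> ?I" for i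
  proof -
    have "rmult X Y i i = (\<Sum>l\<in>{1..bM k Q0}. X i l * Y l i)"
    proof (rule R1[OF R(1)])
      fix l assume l: "X i l \<noteq> 0"
      then have "l \<le> K1" using K1 i by blast
      moreover have "l \<noteq> 0" using l zX by metis
      ultimately show "l \<in> {1..bM k Q0}" using KQ by auto
    qed simp
    then show ?thesis using split by simp
  qed
  have hY: "rmult Y X i i = (\<Sum>l\<in>?I. Y i l * X l i) + (\<Sum>l\<in>?C. Y i l * X l i)" if i: "i \<in> ?I" for i
  proof -
    have "rmult Y X i i = (\<Sum>l\<in>{1..bM k Q0}. Y i l * X l i)"
    proof (rule R1[OF R(2)])
      fix l assume l: "Y i l \<noteq> 0"
      then have "l \<le> K2" using K2 i by blast
      moreover have "l \<noteq> 0" using l zY by metis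
      ultimately show "l \<in> {1..bM k Q0}" using KQ by auto
    qed simp
    then show ?thesis using split by simp
  qed
  have SX: "(\<Sum>i\<in>?I. rmult X Y i i) = (\<Sum>i\<in>?I. \<Sum>l\<in>?I. X i l * Y l i) + (\<Sum>i\<in>?I. \<Sum>l\<in>?C. X i l * Y l i)"
    using hX by (simp add: sum.distrib)
  have SY: "(\<Sum>i\<in>?I. rmult Y X i i) = (\<Sum>i\<in>?I. \<Sum>l\<in>?I. Y i l * X l i) + (\<Sum>i\<in>?I. \<Sum>l\<in>?C. Y i l * X l i)"
    using hY by (simp add: sum.distrib)
  have sw: "(\<Sum>i\<in>?I. \<Sum>l\<in>?I. X i l * Y l i) = (\<Sum>i\<in>?I. \<Sum>l\<in>?I. Y i l * X l i)"
    by (subst sum.swap) (simp add: mult.commute)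
  have dX: "int k dvd (\<Sum>i\<in>?I. \<Sum>l\<in>?C. X i l * Y l i)" by (rule Cross0[OF g Q(2) k])
  have dY: "int k dvd (\<Sum>i\<in>?I. \<Sum>l\<in>?C. Y i l * X l i)" by (rule Cross0[OF g(2) g(1) Q(2) k])
  show ?thesis unfolding SX SY modadd[OF dX] modadd[OF dY] sw ..
qed

lemma common_bound:
  assumes "finite I" "\<forall>x\<in>I. \<exists>B::nat. P x B" "\<forall>x B B'. P x B \<longrightarrow> B \<le> B' \<longrightarrow> P x B'"
  shows "\<exists>B. \<forall>x\<in>I. P x B"
  using assms(1,2)
proof (induction I rule: finite_induct)
  case empty then show ?case by simp
next
  case (insert y F)
  obtain B1 where B1: "\<forall>x\<in>F. P x B1" using insert by auto
  obtain B2 where B2: "P y B2" using insert by auto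
  have "\<forall>x\<in>insert y F. P x (max B1 B2)"
    using B1 B2 assms(3) by (metis insert_iff max.cobounded1 max.cobounded2)
  then show ?case by blast
qed

lemma blktr_sum: "blktr k (\<lambda>i j. \<Sum>c\<in>C. F c i j) p = (\<Sum>c\<in>C. blktr k (F c) p)"
  unfolding blktr_def by (rule sum.swap)

theorem mainTheorem7:
  fixes k m n :: nat and X Y :: rmat
  assumes "k > 0" "m > 0" "n > 0"
    and "\<forall>a\<in>{1..m}. \<forall>c\<in>{1..n}. inRk k (X a c)"
    and "\<forall>c\<in>{1..n}. \<forall>a\<in>{1..m}. inRk k (Y c a)"
  shows "frakT k m (mmult n X Y) = frakT k n (mmult m Y X)"
proof -
  have k: "0 < k" using assms(1) .
  have RX: "inR (X a c)" if "a \<in> {1..m}" "c \<in> {1..n}" for a c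
    using assms(4) that unfolding inRk_def by blast
  have RY: "inR (Y c a)" if "a \<in> {1..m}" "c \<in> {1..n}" for a c
    using assms(5) that unfolding inRk_def by blast
  have "\<exists>B. \<forall>x\<in>{1..m} \<times> {1..n}. good k (X (fst x) (snd x)) B \<and> good k (Y (snd x) (fst x)) B"
  proof (rule common_bound)
    show "\<forall>x\<in>{1..m} \<times> {1..n}. \<exists>B. good k (X (fst x) (snd x)) B \<and> good k (Y (snd x) (fst x)) B"
    proof
      fix x assume x: "x \<in> {1..m} \<times> {1..n}"
      obtain B1 where "good k (X (fst x) (snd x)) B1" using good_exists[OF _ k] assms(4) x by fastforce
      moreover obtain B2 where "good k (Y (snd x) (fst x)) B2" using good_exists[OF _ k] assms(5) x by fastforce
      ultimately show "\<exists>B. good k (X (fst x) (snd x)) B \<and> good k (Y (snd x) (fst x)) B"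
        by (meson good_mono max.cobounded1 max.cobounded2)
    qed
  qed (auto intro: good_mono)
  then obtain B where gB: "\<And>a c. a \<in> {1..m} \<Longrightarrow> c \<in> {1..n} \<Longrightarrow> good k (X a c) B \<and> good k (Y c a) B"
    by fastforce
  have B1: "1 \<le> B" using gB[of 1 1] assms(2,3) good_1 by auto
  have TXY: "Tk k (mmult n X Y a a) = (\<Sum>i\<in>{1..bM k B}. \<Sum>c\<in>{1..n}. rmult (X a c) (Y c a) i i) mod int k"
    if a: "a \<in> {1..m}" for a
  proof -
    have "mmult n X Y a a = (\<lambda>i j. \<Sum>c\<in>{1..n}. rmult (X a c) (Y c a) i j)" by (simp add: mmult_def)
    moreover have "\<forall>p>B. blktr k (\<lambda>i j. \<Sum>c\<in>{1..n}. rmult (X a c) (Y c a) i j) p mod int k = 0"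
    proof (intro allI impI)
      fix p assume p: "B < p"
      have "int k dvd (\<Sum>c\<in>{1..n}. blktr k (rmult (X a c) (Y c a)) p)"
      proof (rule dvd_sum)
        fix c assume c: "c \<in> {1..n}"
        have "blktr k (rmult (X a c) (Y c a)) p mod int k = 0"
          using LemB[OF k RX[OF a c] RY[OF a c] _ _ p] gB[OF a c] by blast
        then show "int k dvd blktr k (rmult (X a c) (Y c a)) p" by (simp add: dvd_eq_mod_eq_0)
      qed
      then show "blktr k (\<lambda>i j. \<Sum>c\<in>{1..n}. rmult (X a c) (Y c a) i j) p mod int k = 0"
        unfolding blktr_sum by (simp add: dvd_eq_mod_eq_0)
    qed
    ultimately show ?thesis using LemA[OF k _ order_refl B1] by simp
  qed
  have TYX: "Tk k (mmult m Y X c c) = (\<Sum>i\<in>{1..bM k B}. \<Sum>a\<in>{1..m}. rmult (Y c a) (X a c) i i) mod int k"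
    if c: "c \<in> {1..n}" for c
  proof -
    have "mmult m Y X c c = (\<lambda>i j. \<Sum>a\<in>{1..m}. rmult (Y c a) (X a c) i j)" by (simp add: mmult_def)
    moreover have "\<forall>p>B. blktr k (\<lambda>i j. \<Sum>a\<in>{1..m}. rmult (Y c a) (X a c) i j) p mod int k = 0"
    proof (intro allI impI)
      fix p assume p: "B < p"
      have "int k dvd (\<Sum>a\<in>{1..m}. blktr k (rmult (Y c a) (X a c)) p)"
      proof (rule dvd_sum)
        fix a assume a: "a \<in> {1..m}"
        have "blktr k (rmult (Y c a) (X a c)) p mod int k = 0"
          using LemB[OF k RY[OF a c] RX[OF a c] _ _ p] gB[OF a c] by blast
        then show "int k dvd blktr k (rmult (Y c a) (X a c)) p" by (simp add: dvd_eq_mod_eq_0)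
      qed
      then show "blktr k (\<lambda>i j. \<Sum>a\<in>{1..m}. rmult (Y c a) (X a c) i j) p mod int k = 0"
        unfolding blktr_sum by (simp add: dvd_eq_mod_eq_0)
    qed
    ultimately show ?thesis using LemA[OF k _ order_refl B1] by simp
  qed
  have L: "frakT k m (mmult n X Y) = (\<Sum>a\<in>{1..m}. \<Sum>c\<in>{1..n}. \<Sum>i\<in>{1..bM k B}. rmult (X a c) (Y c a) i i) mod int k"
  proof -
    have "frakT k m (mmult n X Y) = (\<Sum>a\<in>{1..m}. (\<Sum>i\<in>{1..bM k B}. \<Sum>c\<in>{1..n}. rmult (X a c) (Y c a) i i) mod int k) mod int k"
      unfolding frakT_def using TXY by simp
    also have "\<dots> = (\<Sum>a\<in>{1..m}. \<Sum>i\<in>{1..bM k B}. \<Sum>c\<in>{1..n}. rmult (X a c) (Y c a) i i) mod int k"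
      by (rule mod_sum_eq)
    also have "\<dots> = (\<Sum>a\<in>{1..m}. \<Sum>c\<in>{1..n}. \<Sum>i\<in>{1..bM k B}. rmult (X a c) (Y c a) i i) mod int k"
      by (subst (2) sum.swap) (rule refl)
    finally show ?thesis .
  qed
  have R: "frakT k n (mmult m Y X) = (\<Sum>a\<in>{1..m}. \<Sum>c\<in>{1..n}. \<Sum>i\<in>{1..bM k B}. rmult (Y c a) (X a c) i i) mod int k"
  proof -
    have "frakT k n (mmult m Y X) = (\<Sum>c\<in>{1..n}. (\<Sum>i\<in>{1..bM k B}. \<Sum>a\<in>{1..m}. rmult (Y c a) (X a c) i i) mod int k) mod int k"
      unfolding frakT_def using TYX by simp
    also have "\<dots> = (\<Sum>c\<in>{1..n}. \<Sum>i\<in>{1..bM k B}. \<Sum>a\<in>{1..m}. rmult (Y c a) (X a c) i i) mod int k"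
      by (rule mod_sum_eq)
    also have "\<dots> = (\<Sum>c\<in>{1..n}. \<Sum>a\<in>{1..m}. \<Sum>i\<in>{1..bM k B}. rmult (Y c a) (X a c) i i) mod int k"
      by (subst (2) sum.swap) (rule refl)
    also have "\<dots> = (\<Sum>a\<in>{1..m}. \<Sum>c\<in>{1..n}. \<Sum>i\<in>{1..bM k B}. rmult (Y c a) (X a c) i i) mod int k"
      by (subst sum.swap) (rule refl)
    finally show ?thesis .
  qed
  show ?thesis unfolding L R
  proof (rule sum_mod_cong)
    fix a assume a: "a \<in> {1..m}"
    show "(\<Sum>c\<in>{1..n}. \<Sum>i\<in>{1..bM k B}. rmult (X a c) (Y c a) i i) mod int k =
          (\<Sum>c\<in>{1..n}. \<Sum>i\<in>{1..bM k B}. rmult (Y c a) (X a c) i i) mod int k"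
    proof (rule sum_mod_cong)
      fix c assume c: "c \<in> {1..n}"
      show "(\<Sum>i\<in>{1..bM k B}. rmult (X a c) (Y c a) i i) mod int k = (\<Sum>i\<in>{1..bM k B}. rmult (Y c a) (X a c) i i) mod int k"
        using LemC[OF k RX[OF a c] RY[OF a c]] gB[OF a c] by blast
    qed
  qed
qed

end
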